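(* Let $\delta_i>0$, $L_{17}>0$, and for $\theta_i,\theta_{i-1}\in\mathbb{R}^n$ let $\dot\theta_i=(\theta_i-\theta_{i-1})/\delta_i$. Define $$P_6(x,L_{17})=\begin{cases}1& x<L_{17}/2\\ -3(L_{17}/x)^5+23(L_{17}/x)^4-68(L_{17}/x)^3+96(L_{17}/x)^2-64(L_{17}/x)+17 & L_{17}/2\le x<L_{17}\\ L_{17}/x&\text{otherwise}\end{cases}$$ and $\dot{\bar\theta}_i=\dot\theta_iP_6(\|\dot\theta_i\|,L_{17})$. Let $f_i^d=-c(\theta_i)\,T(\theta_i)\dot\theta_i/\sqrt{\|T(\theta_i)\dot\theta_i\|^2+\epsilon_r}$ be the smoothed Coulomb friction force and $f_i^{d\star}=-c(\theta_i)\,T(\theta_i)\dot{\bar\theta}_i/\sqrt{\|T(\theta_i)\dot{\bar\theta}_i\|^2+\epsilon_r}$ its velocity-limited version. Then: (i) $\dot{\bar\theta}_i$ is twice differentiable in $(\theta_i,\theta_{i-1})$ with locally Lipschitz second derivatives; (ii) $\|\dot{\bar\theta}_i\|\le L_{17}$; (iii) $\dot{\bar\theta}_i=\dot\theta_i$ and $f_i^d=f_i^{d\star}$ whenever $\|\dot\theta_i\|\le L_{17}/2$; (iv) there is a constant $L_{18}$ independent of $L_{17}$ such that $\|\partial\dot{\bar\theta}_i/\partial\theta_i\|\le L_{18}/\delta_i$ and $\|\partial\dot{\bar\theta}_i/\partial\theta_{i-1}\|\le L_{18}/\delta_i$.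
   Context: In the friction model, $\nu>0$ is the friction coefficient, $\epsilon_r>0$ a regularization constant, $A\in\mathbb{R}^{3\times n}$ a constant matrix, $h(\theta_i)=\|A\theta_i\|-\epsilon_r$ the contact distance constraint, $c(\theta_i)=\nu\big[\sqrt{|\partial P_4/\partial x(h(\theta_i),L_2)|^2+\epsilon_r}-\epsilon_r\big]$ with $P_4$ the smooth contact penalty ($P_4(x,L_2)=0$ for $x>1/L_2$, $L_2(1-L_2x)^3$ for $2/(3L_2)<x\le1/L_2$, $-1296L_2^6x^5+3249L_2^5x^4-3137L_2^4x^3+1451L_2^3x^2-323L_2^2x+779L_2/27$ for $1/(3L_2)<x\le2/(3L_2)$, $L_2$ otherwise), and $T(\theta_i)=I-\frac{\partial h}{\partial(A\theta_i)}\frac{\partial h}{\partial(A\theta_i)}^T$ if $h\ge0$, $T(\theta_i)=I$ otherwise. Matrix norms are operator norms. *)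

theory Defs
  imports "HOL-Analysis.Analysis"
begin

definition P4 :: "real \<Rightarrow> real \<Rightarrow> real" where
  "P4 x L2 =
     (if x > 1 / L2 then 0
      else if 2 / (3 * L2) < x then L2 * (1 - L2 * x) ^ 3
      else if 1 / (3 * L2) < x then
        - 1296 * L2^6 * x^5 + 3249 * L2^5 * x^4 - 3137 * L2^4 * x^3
        + 1451 * L2^3 * x^2 - 323 * L2^2 * x + 779 * L2 / 27
      else L2)"

definition P6 :: "real \<Rightarrow> real \<Rightarrow> real" where
  "P6 x L17 =
     (if x < L17 / 2 then 1
      else if x < L17 then
        (let u = L17 / x in
          - 3 * u^5 + 23 * u^4 - 68 * u^3 + 96 * u^2 - 64 * u + 17)
      else L17 / x)"

definition thdot :: "real \<Rightarrow> real^'n \<Rightarrow> real^'n \<Rightarrow> real^'n" where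
  "thdot \<delta> th thp = (1 / \<delta>) *\<^sub>R (th - thp)"

definition thbar :: "real \<Rightarrow> real \<Rightarrow> real^'n \<Rightarrow> real^'n \<Rightarrow> real^'n" where
  "thbar L17 \<delta> th thp = P6 (norm (thdot \<delta> th thp)) L17 *\<^sub>R thdot \<delta> th thp"

definition hdist :: "real \<Rightarrow> real^'n^3 \<Rightarrow> real^'n \<Rightarrow> real" where
  "hdist er A th = norm (A *v th) - er"

definition cfric :: "real \<Rightarrow> real \<Rightarrow> real \<Rightarrow> real^'n^3 \<Rightarrow> real^'n \<Rightarrow> real" where
  "cfric \<nu> er L2 A th =
     \<nu> * (sqrt ((deriv (\<lambda>x. P4 x L2) (hdist er A th))\<^sup>2 + er) - er)"

text \<open>Tangential projector T(theta); the gradient of h with respect to A theta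
  is (A theta)/|A theta| (well defined when h \<ge> 0 since eps_r > 0).\<close>
definition Tproj :: "real \<Rightarrow> real^'n^3 \<Rightarrow> real^'n \<Rightarrow> real^3^3" where
  "Tproj er A th =
     (if hdist er A th \<ge> 0 then
        (let g = (1 / norm (A *v th)) *\<^sub>R (A *v th) in
           mat 1 - (\<chi> i j. g $ i * g $ j))
      else mat 1)"

text \<open>Smoothed Coulomb friction force, evaluated at a velocity v
  (the contact-space velocity is A v).\<close>
definition ffric :: "real \<Rightarrow> real \<Rightarrow> real \<Rightarrow> real^'n^3 \<Rightarrow> real^'n \<Rightarrow> real^'n \<Rightarrow> real^3" where
  "ffric \<nu> er L2 A th v =
     (let w = Tproj er A th *v (A *v v) in
        (- cfric \<nu> er L2 A th / sqrt ((norm w)\<^sup>2 + er)) *\<^sub>R w)"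

end

theory Submission
  imports Defs
begin


definition gp :: "real \<Rightarrow> real" where
  "gp u = - 3 * u^5 + 23 * u^4 - 68 * u^3 + 96 * u^2 - 64 * u + 17"
definition gp1 :: "real \<Rightarrow> real" where
  "gp1 u = - 15 * u^4 + 92 * u^3 - 204 * u^2 + 192 * u - 64"
definition gp2 :: "real \<Rightarrow> real" where
  "gp2 u = - 60 * u^3 + 276 * u^2 - 408 * u + 192"

lemma gp_deriv: "(gp has_real_derivative gp1 u) (at u)"
  unfolding gp_def gp1_def
  by (auto intro!: derivative_eq_intros simp: algebra_simps)

lemma gp1_deriv: "(gp1 has_real_derivative gp2 u) (at u)"
  unfolding gp2_def gp1_def
  by (auto intro!: derivative_eq_intros simp: algebra_simps)

lemma gp_vals: "gp 2 = 1" "gp 1 = 1" "gp1 2 = 0" "gp1 1 = 1" "gp2 2 = 0" "gp2 1 = 0"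
  by (simp_all add: gp_def gp1_def gp2_def)

lemma gp_fact1: "gp u - u = (u - 1)^3 * (- 3 * u^2 + 14 * u - 17)"
  unfolding gp_def by (simp add: algebra_simps power2_eq_square power3_eq_cube power_numeral_reduce)

lemma gp_fact2: "gp u - 1 = (u - 2)^3 * (- 3 * u^2 + 5 * u - 2)"
  unfolding gp_def by (simp add: algebra_simps power2_eq_square power3_eq_cube power_numeral_reduce)

lemma gp_bounds: assumes "1 \<le> u" "u \<le> 2" shows "1 \<le> gp u" "gp u \<le> u"
proof -
  have a: "(u - 1)^3 \<ge> 0" using assms by simp
  have b: "- 3 * u^2 + 14 * u - 17 < 0"
  proof -
    have "- 3 * u^2 + 14 * u - 17 = - 3 * (u - 7/3)^2 - 2/3" by (simp add: algebra_simps power2_eq_square)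
    thus ?thesis using zero_le_power2[of "u - 7/3"] by linarith
  qed
  have "(u - 1)^3 * (- 3 * u^2 + 14 * u - 17) \<le> 0" using a b by (simp add: mult_nonneg_nonpos)
  thus "gp u \<le> u" using gp_fact1[of u] by simp
  have c: "(u - 2)^3 \<le> 0" using assms by (simp add: power_le_zero_eq)
  have d: "- 3 * u^2 + 5 * u - 2 \<le> 0"
  proof -
    have "- 3 * u^2 + 5 * u - 2 = - ((3*u - 2) * (u - 1))" by (simp add: algebra_simps power2_eq_square)
    moreover have "(3*u - 2) * (u - 1) \<ge> 0" using assms by simp
    ultimately show ?thesis by simp
  qed
  have "(u - 2)^3 * (- 3 * u^2 + 5 * u - 2) \<ge> 0" using c d by (simp add: mult_nonpos_nonpos)
  thus "1 \<le> gp u" using gp_fact2[of u] by simp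
qed

lemma P6_alt: "P6 x L = (if x < L/2 then 1 else if x < L then gp (L/x) else L/x)"
  unfolding P6_def gp_def Let_def by simp

definition psi :: "real \<Rightarrow> real \<Rightarrow> real" where "psi L s = P6 (sqrt s) L"

lemma sqrt_less_pos: "0 < y \<Longrightarrow> sqrt s < y \<longleftrightarrow> s < y^2"
  by (metis real_sqrt_less_iff abs_of_pos real_sqrt_abs)

lemma psi_alt: assumes "L > 0"
  shows "psi L s = (if s < L^2/4 then 1 else if s < L^2 then gp (L/sqrt s) else L/sqrt s)"
proof -
  have "sqrt s < L/2 \<longleftrightarrow> s < L^2/4" using sqrt_less_pos[of "L/2" s] assms by (simp add: power_divide)
  moreover have "sqrt s < L \<longleftrightarrow> s < L^2" using sqrt_less_pos[of L s] assms by simp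
  ultimately show ?thesis unfolding psi_def P6_alt by simp
qed

lemma deriv_glue:
  fixes f :: "real \<Rightarrow> real"
  assumes "(f has_field_derivative d) (at a within {..a})" "(f has_field_derivative d) (at a within {a..})"
  shows "(f has_field_derivative d) (at a)"
proof -
  have U: "{..a} \<union> {a..} = (UNIV::real set)" by auto
  show ?thesis using assms unfolding has_field_derivative_def has_derivative_within
    using Lim_within_Un[where s="{..a}" and t="{a..}" and x=a] U by auto
qed

lemma glue3_deriv:
  fixes a b :: real and f0 f1 f2 f0' f1' f2' :: "real \<Rightarrow> real"
  assumes ab: "0 < a" "a < b"
    and d0: "\<And>x. (f0 has_real_derivative f0' x) (at x)"
    and d1: "\<And>x. x > 0 \<Longrightarrow> (f1 has_real_derivative f1' x) (at x)"
    and d2: "\<And>x. x > 0 \<Longrightarrow> (f2 has_real_derivative f2' x) (at x)"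
    and e: "f0 a = f1 a" "f0' a = f1' a" "f1 b = f2 b" "f1' b = f2' b"
  shows "((\<lambda>x. if x < a then f0 x else if x < b then f1 x else f2 x) has_real_derivative
          (if x < a then f0' x else if x < b then f1' x else f2' x)) (at x)"
proof -
  define F where "F = (\<lambda>x. if x < a then f0 x else if x < b then f1 x else f2 x)"
  have "(F has_real_derivative (if x < a then f0' x else if x < b then f1' x else f2' x)) (at x)"
  proof -
    consider "x < a" | "x = a" | "a < x \<and> x < b" | "x = b" | "b < x" by linarith
    then show ?thesis
    proof cases
      case 1
      have "(F has_real_derivative f0' x) (at x)"
        by (rule has_field_derivative_transform_within_open[OF d0, of "{..<a}"]) (use 1 in \<open>auto simp: F_def\<close>)
      then show ?thesis using 1 by simp
    next
      case 3
      have "(F has_real_derivative f1' x) (at x)"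
        by (rule has_field_derivative_transform_within_open[OF d1, of _ "{a<..<b}"]) (use 3 ab in \<open>auto simp: F_def\<close>)
      then show ?thesis using 3 by simp
    next
      case 5
      have "(F has_real_derivative f2' x) (at x)"
        by (rule has_field_derivative_transform_within_open[OF d2, of _ "{b<..}"]) (use 5 ab in \<open>auto simp: F_def\<close>)
      then show ?thesis using 5 ab by simp
    next
      case 2
      have L: "(F has_real_derivative f1' a) (at a within {..a})"
        apply (rule has_field_derivative_transform_within[OF _ zero_less_one, of f0])
        using d0[of a] e ab by (auto simp: F_def has_field_derivative_at_within)
      have R: "(F has_real_derivative f1' a) (at a within {a..})"
        apply (rule has_field_derivative_transform_within[of f1 _ _ _ "b - a"])
        using d1[of a] e ab by (auto simp: F_def has_field_derivative_at_within dist_real_def)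
      show ?thesis using deriv_glue[OF L R] 2 ab by simp
    next
      case 4
      have L: "(F has_real_derivative f2' b) (at b within {..b})"
        apply (rule has_field_derivative_transform_within[of f1 _ _ _ "b - a"])
        using d1[of b] e ab by (auto simp: F_def has_field_derivative_at_within dist_real_def)
      have R: "(F has_real_derivative f2' b) (at b within {b..})"
        apply (rule has_field_derivative_transform_within[OF _ zero_less_one, of f2])
        using d2[of b] e ab by (auto simp: F_def has_field_derivative_at_within)
      show ?thesis using deriv_glue[OF L R] 4 ab by simp
    qed
  qed
  then show ?thesis unfolding F_def .
qed

definition Kf :: "real \<Rightarrow> real \<Rightarrow> real" where "Kf L y = - (y^3) / (2 * L^2)"
definition Kf1 :: "real \<Rightarrow> real \<Rightarrow> real" where "Kf1 L y = - 3 * y^2 / (2 * L^2)"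

lemma Kf_deriv: "(Kf L has_real_derivative Kf1 L u) (at u)"
proof -
  define c where "c = 1 / (2 * L^2)"
  have "((\<lambda>y. - (y^3) * c) has_real_derivative - (3 * u^2) * c) (at u)"
    by (auto intro!: derivative_eq_intros)
  then show ?thesis unfolding Kf_def Kf1_def c_def by simp
qed

lemma u_deriv: assumes "L > 0" "s > 0"
  shows "((\<lambda>s. L / sqrt s) has_real_derivative Kf L (L / sqrt s)) (at s)"
proof -
  have q: "sqrt s > 0" using assms by simp
  have "((\<lambda>s. L / sqrt s) has_real_derivative - L * (inverse (sqrt s) / 2) / (sqrt s)^2) (at s)"
    using assms by (auto intro!: derivative_eq_intros simp: power2_eq_square)
  moreover have "- L * (inverse (sqrt s) / 2) / (sqrt s)^2 = Kf L (L / sqrt s)"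
    using q assms unfolding Kf_def by (simp add: field_simps power2_eq_square power3_eq_cube)
  ultimately show ?thesis by simp
qed

lemma chain_u: assumes "L > 0" "s > 0" "\<And>u. (F has_real_derivative F' u) (at u)"
  shows "((\<lambda>s. F (L / sqrt s)) has_real_derivative F' (L / sqrt s) * Kf L (L / sqrt s)) (at s)"
  using DERIV_chain2[OF assms(3) u_deriv[OF assms(1,2)]] .

definition psi1 :: "real \<Rightarrow> real \<Rightarrow> real" where
  "psi1 L s = (if s < L^2/4 then 0 else if s < L^2 then gp1 (L / sqrt s) * Kf L (L / sqrt s)
              else Kf L (L / sqrt s))"

definition psi2 :: "real \<Rightarrow> real \<Rightarrow> real" where
  "psi2 L s = (if s < L^2/4 then 0 else if s < L^2 then
      (gp2 (L / sqrt s) * Kf L (L / sqrt s) + gp1 (L / sqrt s) * Kf1 L (L / sqrt s)) * Kf L (L / sqrt s)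
              else Kf1 L (L / sqrt s) * Kf L (L / sqrt s))"

lemma sq_pts: assumes "L > 0" shows "L / sqrt (L^2/4) = 2" "L / sqrt (L^2) = 1"
proof -
  have "sqrt (L^2/4) = L/2" using assms by (simp add: real_sqrt_divide)
  then show "L / sqrt (L^2/4) = 2" using assms by (simp only:) simp
  show "L / sqrt (L^2) = 1" using assms by simp
qed

lemma psi_deriv: assumes "L > 0" shows "(psi L has_real_derivative psi1 L s) (at s)"
proof -
  have ab: "0 < L^2/4" "L^2/4 < L^2" using assms by auto
  have "((\<lambda>x. if x < L^2/4 then (\<lambda>_. 1) x else if x < L^2 then (\<lambda>s. gp (L / sqrt s)) x else (\<lambda>s. L / sqrt s) x)
    has_real_derivative (if s < L^2/4 then (\<lambda>_. 0) s else if s < L^2 then (\<lambda>s. gp1 (L / sqrt s) * Kf L (L / sqrt s)) s else (\<lambda>s. Kf L (L / sqrt s)) s)) (at s)"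
    apply (rule glue3_deriv[OF ab])
    using chain_u[OF assms _ gp_deriv] u_deriv[OF assms] assms
    by (auto simp: sq_pts[OF assms] gp_vals Kf_def abs_of_pos[OF assms])
  then show ?thesis unfolding psi1_def psi_alt[OF assms, abs_def] by simp
qed

lemma H1_deriv: "((\<lambda>u. gp1 u * Kf L u) has_real_derivative gp2 u * Kf L u + gp1 u * Kf1 L u) (at u)"
  by (auto intro!: derivative_eq_intros gp1_deriv Kf_deriv)

lemma psi1_deriv: assumes "L > 0" shows "(psi1 L has_real_derivative psi2 L s) (at s)"
proof -
  have ab: "0 < L^2/4" "L^2/4 < L^2" using assms by auto
  have "((\<lambda>x. if x < L^2/4 then (\<lambda>_. 0) x else if x < L^2 then (\<lambda>s. gp1 (L / sqrt s) * Kf L (L / sqrt s)) x else (\<lambda>s. Kf L (L / sqrt s)) x)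
    has_real_derivative (if s < L^2/4 then (\<lambda>_. 0) s else if s < L^2 then (\<lambda>s. (gp2 (L / sqrt s) * Kf L (L / sqrt s) + gp1 (L / sqrt s) * Kf1 L (L / sqrt s)) * Kf L (L / sqrt s)) s else (\<lambda>s. Kf1 L (L / sqrt s) * Kf L (L / sqrt s)) s)) (at s)"
    apply (rule glue3_deriv[OF ab])
    using chain_u[OF assms _ H1_deriv] chain_u[OF assms _ Kf_deriv]
    by (auto simp: sq_pts[OF assms] gp_vals Kf_def abs_of_pos[OF assms])
  then show ?thesis unfolding psi1_def psi2_def by simp
qed

definition gp3 :: "real \<Rightarrow> real" where "gp3 u = - 180 * u^2 + 552 * u - 408"
definition Kf2 :: "real \<Rightarrow> real \<Rightarrow> real" where "Kf2 L y = - 6 * y / (2 * L^2)"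

lemma gp2_deriv: "(gp2 has_real_derivative gp3 u) (at u)"
  unfolding gp2_def gp3_def
  by (auto intro!: derivative_eq_intros simp: algebra_simps)

lemma Kf1_deriv: "(Kf1 L has_real_derivative Kf2 L u) (at u)"
proof -
  define c where "c = 1 / (2 * L^2)"
  have "((\<lambda>y. - 3 * y^2 * c) has_real_derivative - 6 * u * c) (at u)"
    by (auto intro!: derivative_eq_intros)
  then show ?thesis unfolding Kf1_def Kf2_def c_def by simp
qed

lemma lip_deriv:
  fixes F F' :: "real \<Rightarrow> real"
  assumes S: "\<And>x y z. x \<in> S \<Longrightarrow> y \<in> S \<Longrightarrow> x \<le> z \<Longrightarrow> z \<le> y \<Longrightarrow> z \<in> S"
    and d: "\<And>x. x \<in> S \<Longrightarrow> (F has_real_derivative F' x) (at x)"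
    and b: "\<And>x. x \<in> S \<Longrightarrow> \<bar>F' x\<bar> \<le> B" and B: "0 \<le> B"
  shows "B-lipschitz_on S F"
proof (rule lipschitz_on_leI[OF _ B])
  fix x y assume xy: "x \<in> S" "y \<in> S" "x \<le> y"
  show "dist (F x) (F y) \<le> B * dist x y"
  proof (cases "x = y")
    case True then show ?thesis by simp
  next
    case False
    then have "x < y" using xy by simp
    have dd: "(F has_real_derivative F' t) (at t)" if "x \<le> t" "t \<le> y" for t
      by (rule d, rule S[OF xy(1,2) that])
    from MVT2[OF \<open>x < y\<close> dd] obtain z where z: "x < z" "z < y" "F y - F x = (y - x) * F' z"
      by blast
    have "z \<in> S" by (rule S[OF xy(1,2)]) (use z in auto)
    then have "\<bar>F' z\<bar> \<le> B" by (rule b)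
    then have "\<bar>(y - x) * F' z\<bar> \<le> (y - x) * B" using z by (simp add: abs_mult mult_left_mono)
    then show ?thesis using z xy by (simp add: dist_real_def abs_minus_commute mult.commute)
  qed
qed

lemma bound_cont:
  fixes G :: "real \<Rightarrow> real"
  assumes "continuous_on {a..b} G"
  shows "\<exists>B\<ge>0. \<forall>u\<in>{a..b}. \<bar>G u\<bar> \<le> B"
proof -
  have "bounded (G ` {a..b})"
    by (rule compact_imp_bounded[OF compact_continuous_image[OF assms compact_Icc]])
  then obtain B where "B > 0" "\<forall>x\<in>G ` {a..b}. norm x \<le> B" by (auto simp: bounded_pos)
  then show ?thesis by (intro exI[of _ B]) auto
qed

lemma glue_lip:
  fixes f :: "real \<Rightarrow> 'b::metric_space"
  assumes f1: "C-lipschitz_on A f" and f2: "C-lipschitz_on B f"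
    and A: "\<And>x. x \<in> A \<Longrightarrow> x \<le> m" and B: "\<And>x. x \<in> B \<Longrightarrow> m \<le> x" and m: "m \<in> A" "m \<in> B"
  shows "C-lipschitz_on (A \<union> B) f"
proof (rule lipschitz_on_leI)
  show C: "0 \<le> C" using lipschitz_on_nonneg[OF f1] .
  fix x y assume xy: "x \<in> A \<union> B" "y \<in> A \<union> B" "x \<le> y"
  show "dist (f x) (f y) \<le> C * dist x y"
  proof -
    consider "x \<in> A" "y \<in> A" | "x \<in> B" "y \<in> B" | "x \<in> A" "y \<in> B" | "x \<in> B" "y \<in> A" using xy by blast
    then show ?thesis
    proof cases
      case 1 then show ?thesis using lipschitz_onD[OF f1] by blast
    next
      case 2 then show ?thesis using lipschitz_onD[OF f2] by blast
    next
      case 3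
      have "dist (f x) (f y) \<le> dist (f x) (f m) + dist (f m) (f y)" by (rule dist_triangle)
      also have "\<dots> \<le> C * dist x m + C * dist m y"
        using lipschitz_onD[OF f1 3(1) m(1)] lipschitz_onD[OF f2 m(2) 3(2)] by simp
      also have "\<dots> = C * dist x y" using A[OF 3(1)] B[OF 3(2)]
        by (simp add: dist_real_def algebra_simps)
      finally show ?thesis .
    next
      case 4
      then have "x = y" using A B xy by force
      then show ?thesis using C by simp
    qed
  qed
qed

lemma u_range: assumes "L > 0" "L^2/4 \<le> s" "s \<le> L^2" shows "1 \<le> L / sqrt s" "L / sqrt s \<le> 2"
proof -
  have "sqrt (L^2/4) \<le> sqrt s" "sqrt s \<le> sqrt (L^2)" using assms real_sqrt_le_mono by blast+
  moreover have "sqrt (L^2/4) = L/2" using assms by (simp add: real_sqrt_divide)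
  moreover have "sqrt (L^2) = L" using assms by simp
  ultimately have "L/2 \<le> sqrt s" "sqrt s \<le> L" using assms by auto
  moreover have p: "sqrt s > 0" using calculation assms by linarith
  ultimately show "1 \<le> L / sqrt s" "L / sqrt s \<le> 2" using assms by (simp_all add: pos_le_divide_eq[OF p] pos_divide_le_eq[OF p])
qed

lemma u_range2: assumes "L > 0" "L^2 \<le> s" shows "0 \<le> L / sqrt s" "L / sqrt s \<le> 1"
proof -
  have "sqrt (L^2) \<le> sqrt s" using assms real_sqrt_le_mono by blast
  then have "L \<le> sqrt s" using assms by simp
  moreover have p: "sqrt s > 0" using calculation assms by linarith
  ultimately show "0 \<le> L / sqrt s" "L / sqrt s \<le> 1" using assms by (simp_all add: pos_divide_le_eq[OF p])
qed

lemma psi2_lip: assumes L: "L > 0" shows "\<exists>C. C-lipschitz_on UNIV (psi2 L)"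
proof -
  define M where "M = (\<lambda>u. (gp2 u * Kf L u + gp1 u * Kf1 L u) * Kf L u)"
  define M' where "M' = (\<lambda>u. ((gp3 u * Kf L u + Kf1 L u * gp2 u) + (gp2 u * Kf1 L u + Kf2 L u * gp1 u)) * Kf L u
                          + Kf1 L u * (gp2 u * Kf L u + gp1 u * Kf1 L u))"
  define T where "T = (\<lambda>u. Kf1 L u * Kf L u)"
  define T' where "T' = (\<lambda>u. Kf2 L u * Kf L u + Kf1 L u * Kf1 L u)"
  have dM: "(M has_real_derivative M' u) (at u)" for u
    unfolding M_def M'_def by (intro DERIV_mult DERIV_add gp1_deriv gp2_deriv Kf_deriv Kf1_deriv)
  have dT: "(T has_real_derivative T' u) (at u)" for u
    unfolding T_def T'_def by (intro DERIV_mult DERIV_add Kf_deriv Kf1_deriv)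
  have cK: "continuous_on S (Kf L)" "continuous_on S (Kf1 L)" "continuous_on S (Kf2 L)"
    "continuous_on S gp1" "continuous_on S gp2" "continuous_on S gp3" for S
  proof -
    have ic: "(\<And>x. (f has_real_derivative f' x) (at x)) \<Longrightarrow> continuous_on S f" for f f'
      by (intro continuous_at_imp_continuous_on ballI DERIV_isCont) blast
    show "continuous_on S (Kf L)" by (rule ic[OF Kf_deriv])
    show "continuous_on S (Kf1 L)" by (rule ic[OF Kf1_deriv])
    show "continuous_on S gp1" by (rule ic[OF gp1_deriv])
    show "continuous_on S gp2" by (rule ic[OF gp2_deriv])
    show "continuous_on S (Kf2 L)" unfolding Kf2_def using L by (intro continuous_intros) auto
    show "continuous_on S gp3" unfolding gp3_def by (intro continuous_intros)
  qed
  have c1: "continuous_on {1..2} (\<lambda>u. M' u * Kf L u)"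
    unfolding M'_def by (intro continuous_intros cK)
  have c2: "continuous_on {0..1} (\<lambda>u. T' u * Kf L u)"
    unfolding T'_def by (intro continuous_intros cK)
  obtain B1 where B1: "B1 \<ge> 0" "\<forall>u\<in>{1..2}. \<bar>M' u * Kf L u\<bar> \<le> B1"
    using bound_cont[OF c1] by blast
  obtain B2 where B2: "B2 \<ge> 0" "\<forall>u\<in>{0..1}. \<bar>T' u * Kf L u\<bar> \<le> B2"
    using bound_cont[OF c2] by blast
  define C where "C = max B1 B2"
  have C: "0 \<le> C" "B1 \<le> C" "B2 \<le> C" using B1 B2 by (auto simp: C_def)
  have l0: "C-lipschitz_on {..L^2/4} (psi2 L)"
  proof -
    have "0-lipschitz_on {..L^2/4} (\<lambda>_. 0::real)" by (rule lipschitz_on_constant)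
    then have "C-lipschitz_on {..L^2/4} (\<lambda>_. 0::real)" using C(1) by (rule lipschitz_on_le)
    moreover have "psi2 L s = 0" if "s \<in> {..L^2/4}" for s
    proof (cases "s < L^2/4")
      case True then show ?thesis unfolding psi2_def by simp
    next
      case False
      then have e: "s = L^2/4" using that by simp
      have "L^2/4 < L^2" using L by simp
      then show ?thesis using sq_pts[OF L] gp_vals unfolding e psi2_def by simp
    qed
    ultimately show ?thesis by (rule lipschitz_on_transform)
  qed
  have l1: "C-lipschitz_on {L^2/4..L^2} (psi2 L)"
  proof -
    have pos: "0 < L^2/4" using L by simp
    have "B1-lipschitz_on {L^2/4..L^2} (\<lambda>s. M (L / sqrt s))"
    proof (rule lip_deriv)
      fix x assume x: "x \<in> {L^2/4..L^2}"
      then have "L^2/4 \<le> x" by simp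
      then have "x > 0" using pos by linarith
      then show "((\<lambda>s. M (L / sqrt s)) has_real_derivative M' (L / sqrt x) * Kf L (L / sqrt x)) (at x)"
        using chain_u[OF L _ dM] by blast
      show "\<bar>M' (L / sqrt x) * Kf L (L / sqrt x)\<bar> \<le> B1"
        using B1 u_range[OF L, of x] x by auto
    qed (use B1 in auto)
    then have "C-lipschitz_on {L^2/4..L^2} (\<lambda>s. M (L / sqrt s))" using C(2) by (rule lipschitz_on_le)
    moreover have "psi2 L s = M (L / sqrt s)" if "s \<in> {L^2/4..L^2}" for s
    proof (cases "s < L^2")
      case True then show ?thesis using that unfolding psi2_def M_def by simp
    next
      case False
      then have e: "s = L^2" using that by simp
      have "\<not> L^2 < L^2/4" using L by simp
      then show ?thesis using sq_pts[OF L] gp_vals unfolding e psi2_def M_def by simp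
    qed
    ultimately show ?thesis by (rule lipschitz_on_transform)
  qed
  have l2: "C-lipschitz_on {L^2..} (psi2 L)"
  proof -
    have pos: "0 < L^2" using L by simp
    have "B2-lipschitz_on {L^2..} (\<lambda>s. T (L / sqrt s))"
    proof (rule lip_deriv)
      fix x assume x: "x \<in> {L^2..}"
      then have "L^2 \<le> x" by simp
      then have "x > 0" using pos by linarith
      then show "((\<lambda>s. T (L / sqrt s)) has_real_derivative T' (L / sqrt x) * Kf L (L / sqrt x)) (at x)"
        using chain_u[OF L _ dT] by blast
      show "\<bar>T' (L / sqrt x) * Kf L (L / sqrt x)\<bar> \<le> B2"
        using B2 u_range2[OF L, of x] x by auto
    qed (use B2 in auto)
    then have "C-lipschitz_on {L^2..} (\<lambda>s. T (L / sqrt s))" using C(3) by (rule lipschitz_on_le)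
    moreover have "psi2 L s = T (L / sqrt s)" if "s \<in> {L^2..}" for s
    proof -
      have "L^2 \<le> s" using that by simp
      moreover have "L^2/4 < L^2" using L by simp
      ultimately have "\<not> s < L^2/4" "\<not> s < L^2" by linarith+
      then show ?thesis unfolding psi2_def T_def by simp
    qed
    ultimately show ?thesis by (rule lipschitz_on_transform)
  qed
  have "C-lipschitz_on ({..L^2/4} \<union> {L^2/4..L^2}) (psi2 L)"
    by (rule glue_lip[OF l0 l1, where m="L^2/4"]) (use L in auto)
  moreover have "{..L^2/4} \<union> {L^2/4..L^2} = {..L^2}"
  proof -
    have gen: "a \<le> b \<Longrightarrow> {..a} \<union> {a..b} = {..(b::real)}" for a b by auto
    show ?thesis by (rule gen) (use L in simp)
  qed
  ultimately have l01: "C-lipschitz_on {..L^2} (psi2 L)" by simp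
  have "C-lipschitz_on ({..L^2} \<union> {L^2..}) (psi2 L)"
    by (rule glue_lip[OF l01 l2, where m="L^2"]) auto
  moreover have "{..L^2} \<union> {L^2..} = (UNIV::real set)" by auto
  ultimately have "C-lipschitz_on UNIV (psi2 L)" by simp
  then show ?thesis by (rule exI)
qed

lemma psi2_cont: assumes "L > 0" shows "continuous_on UNIV (psi2 L)"
proof -
  obtain C where "C-lipschitz_on UNIV (psi2 L)" using psi2_lip[OF assms] by (elim exE)
  then show ?thesis by (rule lipschitz_on_continuous_on)
qed

lemma psi1_lip: assumes L: "L > 0" shows "\<exists>C. C-lipschitz_on {a..b} (psi1 L)"
proof -
  obtain B where B: "B \<ge> 0" "\<forall>u\<in>{a..b}. \<bar>psi2 L u\<bar> \<le> B"
  proof -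
    have "continuous_on {a..b} (psi2 L)" using psi2_cont[OF L] by (rule continuous_on_subset) simp
    from bound_cont[OF this] show ?thesis using that by (elim exE conjE)
  qed
  have "B-lipschitz_on {a..b} (psi1 L)"
  proof (rule lip_deriv[OF _ psi1_deriv[OF L]])
    show "\<And>x y z. x \<in> {a..b} \<Longrightarrow> y \<in> {a..b} \<Longrightarrow> x \<le> z \<Longrightarrow> z \<le> y \<Longrightarrow> z \<in> {a..b}" by simp
    show "\<And>x. x \<in> {a..b} \<Longrightarrow> \<bar>psi2 L x\<bar> \<le> B" using B(2) by blast
  qed (rule B(1))
  then show ?thesis by (rule exI)
qed



definition outer :: "'b::real_normed_vector \<Rightarrow> 'a::real_inner \<Rightarrow> 'a \<Rightarrow>\<^sub>L 'b" where
  "outer a b = blinfun_scaleR_left a o\<^sub>L blinfun_inner_left b"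

lemma outer_apply[simp]: "blinfun_apply (outer a b) h = (h \<bullet> b) *\<^sub>R a"
  unfolding outer_def by (simp add: blinfun_inner_left.rep_eq)

lemma outer_bb: "bounded_bilinear (outer :: 'b::real_normed_vector \<Rightarrow> 'a::real_inner \<Rightarrow> 'a \<Rightarrow>\<^sub>L 'b)"
  unfolding outer_def[abs_def]
  by (rule bounded_bilinear.comp[OF bounded_bilinear_blinfun_compose
        bounded_linear_blinfun_scaleR_left bounded_linear_blinfun_inner_left])

definition Rfl :: "'a::real_inner \<Rightarrow> 'a \<Rightarrow>\<^sub>L ('a \<Rightarrow>\<^sub>L 'a)" where
  "Rfl v = Blinfun (\<lambda>k. outer k v)"
definition Sfl :: "'a::real_inner \<Rightarrow> 'a \<Rightarrow>\<^sub>L ('a \<Rightarrow>\<^sub>L 'a)" where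
  "Sfl v = Blinfun (\<lambda>k. outer v k)"

lemma Rfl_apply[simp]: "blinfun_apply (Rfl v) k = outer k v"
  unfolding Rfl_def
  by (rule bounded_linear_Blinfun_apply[OF bounded_bilinear.bounded_linear_left[OF outer_bb], THEN fun_cong])
lemma Sfl_apply[simp]: "blinfun_apply (Sfl v) k = outer v k"
  unfolding Sfl_def
  by (rule bounded_linear_Blinfun_apply[OF bounded_bilinear.bounded_linear_right[OF outer_bb], THEN fun_cong])

lemma Rfl_lin: "bounded_linear (Rfl :: 'a::real_inner \<Rightarrow> _)"
proof -
  obtain K where K: "K > 0" "\<And>a b. norm (outer a b :: 'a \<Rightarrow>\<^sub>L 'a) \<le> norm a * norm b * K"
    using bounded_bilinear.pos_bounded[OF outer_bb] by blast
  show ?thesis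
  proof (rule bounded_linear_intro[where K=K])
    show "Rfl (x + y) = Rfl x + Rfl y" for x y :: 'a
      by (intro blinfun_eqI) (simp add: blinfun.bilinear_simps inner_add_right scaleR_add_left)
    show "Rfl (r *\<^sub>R x) = r *\<^sub>R Rfl x" for r and x :: 'a
      by (intro blinfun_eqI) (simp add: blinfun.bilinear_simps)
    show "norm (Rfl x) \<le> norm x * K" for x :: 'a
    proof (rule norm_blinfun_bound)
      show "0 \<le> norm x * K" using K by simp
      show "norm (Rfl x k) \<le> norm x * K * norm k" for k
        using K(2)[of k x] by (simp add: mult_ac)
    qed
  qed
qed

lemma Sfl_lin: "bounded_linear (Sfl :: 'a::real_inner \<Rightarrow> _)"
proof -
  obtain K where K: "K > 0" "\<And>a b. norm (outer a b :: 'a \<Rightarrow>\<^sub>L 'a) \<le> norm a * norm b * K"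
    using bounded_bilinear.pos_bounded[OF outer_bb] by blast
  show ?thesis
  proof (rule bounded_linear_intro[where K=K])
    show "Sfl (x + y) = Sfl x + Sfl y" for x y :: 'a
      by (intro blinfun_eqI) (simp add: blinfun.bilinear_simps scaleR_add_right)
    show "Sfl (r *\<^sub>R x) = r *\<^sub>R Sfl x" for r and x :: 'a
      by (intro blinfun_eqI) (simp add: blinfun.bilinear_simps)
    show "norm (Sfl x) \<le> norm x * K" for x :: 'a
    proof (rule norm_blinfun_bound)
      show "0 \<le> norm x * K" using K by simp
      show "norm (Sfl x k) \<le> norm x * K * norm k" for k
        using K(2)[of x k] by (simp add: mult_ac)
    qed
  qed
qed

definition phi :: "real \<Rightarrow> 'a::real_inner \<Rightarrow> 'a" where
  "phi L v = psi L (v \<bullet> v) *\<^sub>R v"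

definition Dphi :: "real \<Rightarrow> 'a::real_inner \<Rightarrow> 'a \<Rightarrow>\<^sub>L 'a" where
  "Dphi L v = psi L (v \<bullet> v) *\<^sub>R id_blinfun + (2 * psi1 L (v \<bullet> v)) *\<^sub>R outer v v"

definition D2phi :: "real \<Rightarrow> 'a::real_inner \<Rightarrow> 'a \<Rightarrow>\<^sub>L ('a \<Rightarrow>\<^sub>L 'a)" where
  "D2phi L v = (2 * psi1 L (v \<bullet> v)) *\<^sub>R (outer id_blinfun v + Rfl v + Sfl v)
              + (4 * psi2 L (v \<bullet> v)) *\<^sub>R outer (outer v v) v"

lemma psi_hd: assumes "L > 0" "(f has_derivative f') (at x within S)"
  shows "((\<lambda>x. psi L (f x)) has_derivative (\<lambda>h. f' h * psi1 L (f x))) (at x within S)"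
  by (rule DERIV_compose_FDERIV[OF psi_deriv[OF assms(1)] assms(2)])

lemma psi1_hd: assumes "L > 0" "(f has_derivative f') (at x within S)"
  shows "((\<lambda>x. psi1 L (f x)) has_derivative (\<lambda>h. f' h * psi2 L (f x))) (at x within S)"
  by (rule DERIV_compose_FDERIV[OF psi1_deriv[OF assms(1)] assms(2)])

lemma inner_self_hd: "((\<lambda>x. x \<bullet> x) has_derivative (\<lambda>h. 2 * (v \<bullet> h))) (at v within S)"
proof -
  have "((\<lambda>x. x \<bullet> x) has_derivative (\<lambda>h. v \<bullet> h + h \<bullet> v)) (at v within S)"
    by (rule has_derivative_inner[OF has_derivative_ident has_derivative_ident])
  then show ?thesis by (rule has_derivative_eq_rhs) (simp add: inner_commute[of _ v])
qed

lemma phi_deriv: assumes L: "L > 0"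
  shows "(phi L has_derivative blinfun_apply (Dphi L v)) (at v)"
proof -
  have "((\<lambda>v. psi L (v \<bullet> v) *\<^sub>R v) has_derivative
     (\<lambda>h. psi L (v \<bullet> v) *\<^sub>R h + (2 * (v \<bullet> h) * psi1 L (v \<bullet> v)) *\<^sub>R v)) (at v)"
    by (rule has_derivative_scaleR[OF psi_hd[OF L inner_self_hd] has_derivative_ident])
  then show ?thesis unfolding phi_def[abs_def]
  proof (rule has_derivative_eq_rhs)
    show "(\<lambda>h. psi L (v \<bullet> v) *\<^sub>R h + (2 * (v \<bullet> h) * psi1 L (v \<bullet> v)) *\<^sub>R v) = blinfun_apply (Dphi L v)"
      by (rule ext) (simp add: Dphi_def blinfun.bilinear_simps inner_commute)
  qed
qed

lemma Dphi_deriv: assumes L: "L > 0"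
  shows "(Dphi L has_derivative blinfun_apply (D2phi L v)) (at (v::'a::real_inner))"
proof -
  have a: "((\<lambda>v. psi L (v \<bullet> v) *\<^sub>R (id_blinfun::'a \<Rightarrow>\<^sub>L 'a)) has_derivative
      (\<lambda>h. psi L (v \<bullet> v) *\<^sub>R 0 + (2 * (v \<bullet> h) * psi1 L (v \<bullet> v)) *\<^sub>R id_blinfun)) (at v)"
    by (rule has_derivative_scaleR[OF psi_hd[OF L inner_self_hd] has_derivative_const])
  have b: "((\<lambda>v. 2 * psi1 L (v \<bullet> v)) has_derivative (\<lambda>h. 2 * (2 * (v \<bullet> h) * psi2 L (v \<bullet> v)))) (at v)"
    by (rule has_derivative_mult_right[OF psi1_hd[OF L inner_self_hd]])
  have c: "((\<lambda>v. outer v v :: 'a \<Rightarrow>\<^sub>L 'a) has_derivative (\<lambda>h. outer v h + outer h v)) (at v)"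
    by (rule bounded_bilinear.FDERIV[OF outer_bb has_derivative_ident has_derivative_ident])
  have "(Dphi L has_derivative
     (\<lambda>h. (psi L (v \<bullet> v) *\<^sub>R 0 + (2 * (v \<bullet> h) * psi1 L (v \<bullet> v)) *\<^sub>R id_blinfun) +
          ((2 * psi1 L (v \<bullet> v)) *\<^sub>R (outer v h + outer h v) + (2 * (2 * (v \<bullet> h) * psi2 L (v \<bullet> v))) *\<^sub>R outer v v))) (at v)"
    unfolding Dphi_def[abs_def]
    by (rule has_derivative_add[OF a has_derivative_scaleR[OF b c]])
  then show ?thesis
  proof (rule has_derivative_eq_rhs)
    show "(\<lambda>h. (psi L (v \<bullet> v) *\<^sub>R 0 + (2 * (v \<bullet> h) * psi1 L (v \<bullet> v)) *\<^sub>R id_blinfun) +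
          ((2 * psi1 L (v \<bullet> v)) *\<^sub>R (outer v h + outer h v) + (2 * (2 * (v \<bullet> h) * psi2 L (v \<bullet> v))) *\<^sub>R outer v v))
        = blinfun_apply (D2phi L v)"
      by (intro ext blinfun_eqI) (simp add: D2phi_def blinfun.bilinear_simps inner_commute algebra_simps)
  qed
qed

lemma lip_bounded_image:
  fixes f :: "'a::metric_space \<Rightarrow> 'b::real_normed_vector"
  assumes f: "C-lipschitz_on U f" and U: "bounded U"
  shows "\<exists>M\<ge>0. \<forall>x\<in>U. norm (f x) \<le> M"
proof (cases "U = {}")
  case True then show ?thesis by auto
next
  case False
  then obtain x0 where x0: "x0 \<in> U" by blast
  from U obtain a e where ae: "\<forall>y\<in>U. dist a y \<le> e" by (auto simp: bounded_def)
  have C: "C \<ge> 0" using lipschitz_on_nonneg[OF f] .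
  have "norm (f x) \<le> norm (f x0) + C * (2 * e)" if x: "x \<in> U" for x
  proof -
    have "dist x x0 \<le> dist a x + dist a x0" by (rule dist_triangle3)
    also have "\<dots> \<le> 2 * e" using ae[rule_format, OF x] ae[rule_format, OF x0] by linarith
    finally have d: "dist x x0 \<le> 2 * e" .
    have "norm (f x) \<le> norm (f x0) + dist (f x) (f x0)"
      by (metis dist_norm norm_triangle_sub)
    also have "dist (f x) (f x0) \<le> C * dist x x0" by (rule lipschitz_onD[OF f x x0])
    also have "C * dist x x0 \<le> C * (2 * e)" by (rule mult_left_mono[OF d C])
    finally show ?thesis by simp
  qed
  then have "\<forall>x\<in>U. norm (f x) \<le> max 0 (norm (f x0) + C * (2 * e))"
    by (meson max.cobounded2 order_trans)
  then show ?thesis by (intro exI[of _ "max 0 (norm (f x0) + C * (2 * e))"]) simp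
qed

lemma bilin_lip:
  assumes P: "bounded_bilinear P" and U: "bounded U"
    and f: "C1-lipschitz_on U f" and g: "C2-lipschitz_on U g"
  shows "\<exists>C. C-lipschitz_on U (\<lambda>x. P (f x) (g x))"
proof -
  obtain M1 where M1: "M1 \<ge> 0" "\<forall>x\<in>U. norm (f x) \<le> M1" using lip_bounded_image[OF f U] by blast
  obtain M2 where M2: "M2 \<ge> 0" "\<forall>x\<in>U. norm (g x) \<le> M2" using lip_bounded_image[OF g U] by blast
  obtain K where K: "K > 0" "\<And>a b. norm (P a b) \<le> norm a * norm b * K"
    using bounded_bilinear.pos_bounded[OF P] by blast
  have C1: "C1 \<ge> 0" using lipschitz_on_nonneg[OF f] .
  have C2: "C2 \<ge> 0" using lipschitz_on_nonneg[OF g] .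
  have "(K * (C1 * M2 + M1 * C2))-lipschitz_on U (\<lambda>x. P (f x) (g x))"
  proof (rule lipschitz_onI)
    show "0 \<le> K * (C1 * M2 + M1 * C2)" using K M1 M2 C1 C2 by simp
    fix x y assume x: "x \<in> U" and y: "y \<in> U"
    have eq: "P (f x) (g x) - P (f y) (g y) = P (f x - f y) (g x) + P (f y) (g x - g y)"
      by (simp add: bounded_bilinear.diff_left[OF P] bounded_bilinear.diff_right[OF P])
    have n1: "norm (P (f x - f y) (g x)) \<le> (C1 * dist x y) * M2 * K"
    proof -
      have "norm (P (f x - f y) (g x)) \<le> norm (f x - f y) * norm (g x) * K" by (rule K(2))
      also have "\<dots> \<le> (C1 * dist x y) * M2 * K"
      proof (intro mult_right_mono mult_mono)
        show "norm (f x - f y) \<le> C1 * dist x y" using lipschitz_onD[OF f x y] by (simp add: dist_norm)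
        show "norm (g x) \<le> M2" using M2 x by auto
      qed (use K C1 in auto)
      finally show ?thesis .
    qed
    have n2: "norm (P (f y) (g x - g y)) \<le> M1 * (C2 * dist x y) * K"
    proof -
      have "norm (P (f y) (g x - g y)) \<le> norm (f y) * norm (g x - g y) * K" by (rule K(2))
      also have "\<dots> \<le> M1 * (C2 * dist x y) * K"
      proof (intro mult_right_mono mult_mono)
        show "norm (g x - g y) \<le> C2 * dist x y" using lipschitz_onD[OF g x y] by (simp add: dist_norm)
        show "norm (f y) \<le> M1" using M1 y by auto
      qed (use K M1 in auto)
      finally show ?thesis .
    qed
    have "dist (P (f x) (g x)) (P (f y) (g y)) = norm (P (f x - f y) (g x) + P (f y) (g x - g y))"
      by (simp add: dist_norm eq)
    also have "\<dots> \<le> norm (P (f x - f y) (g x)) + norm (P (f y) (g x - g y))" by (rule norm_triangle_ineq)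
    also have "\<dots> \<le> (C1 * dist x y) * M2 * K + M1 * (C2 * dist x y) * K" using n1 n2 by simp
    also have "\<dots> = K * (C1 * M2 + M1 * C2) * dist x y" by (simp add: algebra_simps)
    finally show "dist (P (f x) (g x)) (P (f y) (g y)) \<le> K * (C1 * M2 + M1 * C2) * dist x y" .
  qed
  then show ?thesis by (rule exI)
qed

lemma lin_lip: "bounded_linear f \<Longrightarrow> \<exists>C. C-lipschitz_on U f"
  by (metis bounded_linear.lipschitz_boundE)

lemma D2phi_lip: assumes L: "L > 0"
  shows "\<exists>C. C-lipschitz_on (ball v0 1) (D2phi L :: 'a::real_inner \<Rightarrow> _)"
proof -
  define U where "U = ball v0 (1::real)"
  have U: "bounded U" unfolding U_def by simp
  define R where "R = (norm v0 + 1)^2"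
  have img: "(\<lambda>v::'a. v \<bullet> v) ` U \<subseteq> {0..R}"
  proof
    fix s assume "s \<in> (\<lambda>v::'a. v \<bullet> v) ` U"
    then obtain v where v: "v \<in> U" "s = v \<bullet> v" by blast
    have "norm v \<le> norm v0 + 1"
      using v(1) unfolding U_def by (metis dist_norm mem_ball norm_minus_commute norm_triangle_sub add_le_cancel_left less_imp_le order_trans)
    then have "norm v ^ 2 \<le> R" unfolding R_def by (intro power_mono) auto
    then show "s \<in> {0..R}" using v(2) by (simp add: power2_norm_eq_inner)
  qed
  obtain Cs where Cs: "Cs-lipschitz_on U (\<lambda>v::'a. v \<bullet> v)"
    using bilin_lip[OF bounded_bilinear_inner U lipschitz_on_id lipschitz_on_id] by blast
  obtain Cp1 where Cp1: "Cp1-lipschitz_on {0..R} (psi1 L)" using psi1_lip[OF L] by blast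
  obtain Cp2 where Cp2: "Cp2-lipschitz_on UNIV (psi2 L)" using psi2_lip[OF L] by blast
  have f1: "(\<bar>2\<bar> * (Cp1 * Cs))-lipschitz_on U (\<lambda>v. 2 * psi1 L (v \<bullet> v))"
    by (intro lipschitz_on_cmult_real lipschitz_on_compose2[OF Cs] lipschitz_on_subset[OF Cp1 img])
  have f2: "(\<bar>4\<bar> * (Cp2 * Cs))-lipschitz_on U (\<lambda>v. 4 * psi2 L (v \<bullet> v))"
    by (intro lipschitz_on_cmult_real lipschitz_on_compose2[OF Cs] lipschitz_on_subset[OF Cp2]) auto
  have bl1: "bounded_linear (\<lambda>v::'a. outer id_blinfun v + Rfl v + Sfl v)"
    by (intro bounded_linear_add bounded_bilinear.bounded_linear_right[OF outer_bb] Rfl_lin Sfl_lin)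
  obtain CB1 where B1: "CB1-lipschitz_on U (\<lambda>v::'a. outer id_blinfun v + Rfl v + Sfl v)"
    using lin_lip[OF bl1] by blast
  obtain CO where CO: "CO-lipschitz_on U (\<lambda>v::'a. outer v v :: 'a \<Rightarrow>\<^sub>L 'a)"
    using bilin_lip[OF outer_bb U lipschitz_on_id lipschitz_on_id] by blast
  obtain CB2 where B2: "CB2-lipschitz_on U (\<lambda>v::'a. outer (outer v v) v)"
    using bilin_lip[OF outer_bb U CO lipschitz_on_id] by blast
  obtain T1 where T1: "T1-lipschitz_on U (\<lambda>v::'a. (2 * psi1 L (v \<bullet> v)) *\<^sub>R (outer id_blinfun v + Rfl v + Sfl v))"
    using bilin_lip[OF bounded_bilinear_scaleR U f1 B1] by blast
  obtain T2 where T2: "T2-lipschitz_on U (\<lambda>v::'a. (4 * psi2 L (v \<bullet> v)) *\<^sub>R outer (outer v v) v)"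
    using bilin_lip[OF bounded_bilinear_scaleR U f2 B2] by blast
  have "(T1 + T2)-lipschitz_on U (D2phi L :: 'a \<Rightarrow> _)"
    unfolding D2phi_def[abs_def] by (rule lipschitz_on_add[OF T1 T2])
  then show ?thesis unfolding U_def by (rule exI)
qed



lemma Kf_s: assumes L: "L > 0" and s: "s > 0" shows "Kf L (L / sqrt s) * s = - (L / sqrt s) / 2"
proof -
  have r: "sqrt s > 0" using s by simp
  have ss: "s = sqrt s ^ 2" using s by simp
  show ?thesis unfolding Kf_def
    by (subst (3) ss, subst (2) ss) (use r L in \<open>simp add: field_simps power2_eq_square power3_eq_cube\<close>)
qed

lemma psi1_s_bound: "\<exists>B0\<ge>0. \<forall>L s. L > 0 \<longrightarrow> 0 \<le> s \<longrightarrow> \<bar>psi1 L s\<bar> * s \<le> B0"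
proof -
  have cg: "continuous_on {1..2} (\<lambda>u. gp1 u * u / 2)"
  proof -
    have "continuous_on {1..2} gp1"
      by (intro continuous_at_imp_continuous_on ballI DERIV_isCont[OF gp1_deriv])
    then show ?thesis by (intro continuous_intros) auto
  qed
  obtain B where B: "B \<ge> 0" "\<forall>u\<in>{1..2}. \<bar>gp1 u * u / 2\<bar> \<le> B" using bound_cont[OF cg] by blast
  have "\<bar>psi1 L s\<bar> * s \<le> max B (1/2)" if L: "L > 0" and s0: "0 \<le> s" for L s
  proof -
    consider "s < L^2/4" | "L^2/4 \<le> s" "s < L^2" | "L^2 \<le> s" by linarith
    then show ?thesis
    proof cases
      case 1 then show ?thesis unfolding psi1_def using B by simp
    next
      case 2
      have sp: "s > 0" using 2 L zero_less_power[OF L, of 2] by linarith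
      have u: "1 \<le> L / sqrt s" "L / sqrt s \<le> 2" using u_range[OF L 2(1)] 2 by auto
      have "\<bar>psi1 L s\<bar> * s = \<bar>gp1 (L / sqrt s) * (Kf L (L / sqrt s) * s)\<bar>"
        unfolding psi1_def using 2 s0 by (simp add: abs_mult)
      also have "\<dots> = \<bar>gp1 (L / sqrt s) * (L / sqrt s) / 2\<bar>" unfolding Kf_s[OF L sp] by (simp add: abs_mult)
      also have "\<dots> \<le> B"
      proof -
        have "L / sqrt s \<in> {1..2}" using u by simp
        from bspec[OF B(2) this] show ?thesis .
      qed
      finally show ?thesis by simp
    next
      case 3
      have sp: "s > 0" using 3 L zero_less_power[OF L, of 2] by linarith
      have u: "0 \<le> L / sqrt s" "L / sqrt s \<le> 1" using u_range2[OF L 3] by auto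
      have n: "\<not> s < L^2/4" "\<not> s < L^2" using 3 L using zero_less_power[OF L, of 2] by linarith+
      have "\<bar>psi1 L s\<bar> * s = \<bar>Kf L (L / sqrt s) * s\<bar>"
        unfolding psi1_def using n s0 by (simp add: abs_mult)
      also have "\<dots> = (L / sqrt s) / 2" unfolding Kf_s[OF L sp] using u L sp by simp
      also have "\<dots> \<le> 1/2" using u by simp
      finally show ?thesis by simp
    qed
  qed
  then show ?thesis by (intro exI[of _ "max B (1/2)"]) auto
qed

lemma psi_bound: assumes L: "L > 0" shows "\<bar>psi L s\<bar> \<le> 2"
proof -
  consider "s < L^2/4" | "L^2/4 \<le> s" "s < L^2" | "L^2 \<le> s" by linarith
  then show ?thesis
  proof cases
    case 1 then show ?thesis using psi_alt[OF L] by simp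
  next
    case 2
    have u: "1 \<le> L / sqrt s" "L / sqrt s \<le> 2" using u_range[OF L 2(1)] 2 by auto
    then have "1 \<le> gp (L / sqrt s)" "gp (L / sqrt s) \<le> 2" using gp_bounds[OF u] by auto
    then show ?thesis using psi_alt[OF L, of s] 2 by simp
  next
    case 3
    have n: "\<not> s < L^2/4" "\<not> s < L^2" using 3 L using zero_less_power[OF L, of 2] by linarith+
    have u: "0 \<le> L / sqrt s" "L / sqrt s \<le> 1" using u_range2[OF L 3] by auto
    then show ?thesis using psi_alt[OF L, of s] n by simp
  qed
qed

lemma Dphi_norm: assumes L: "L > 0" and B0: "\<forall>L s. L > 0 \<longrightarrow> 0 \<le> s \<longrightarrow> \<bar>psi1 L s\<bar> * s \<le> B0"
  shows "norm (Dphi L (w::'a::real_inner)) \<le> 2 + 2 * B0"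
proof (rule norm_blinfun_bound)
  have B0n: "0 \<le> B0" using B0[rule_format, OF L, of 0] by simp
  then show "0 \<le> 2 + 2 * B0" by simp
  fix h :: 'a
  have p1: "\<bar>psi1 L (w \<bullet> w)\<bar> * (w \<bullet> w) \<le> B0" using B0 L by simp
  have eq: "blinfun_apply (Dphi L w) h = psi L (w \<bullet> w) *\<^sub>R h + (2 * psi1 L (w \<bullet> w) * (h \<bullet> w)) *\<^sub>R w"
    by (simp add: Dphi_def blinfun.bilinear_simps)
  have "norm (blinfun_apply (Dphi L w) h) \<le> norm (psi L (w \<bullet> w) *\<^sub>R h) + norm ((2 * psi1 L (w \<bullet> w) * (h \<bullet> w)) *\<^sub>R w)"
    unfolding eq by (rule norm_triangle_ineq)
  also have "norm (psi L (w \<bullet> w) *\<^sub>R h) \<le> 2 * norm h"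
    using psi_bound[OF L] by (simp add: mult_right_mono)
  also have "norm ((2 * psi1 L (w \<bullet> w) * (h \<bullet> w)) *\<^sub>R w) \<le> 2 * B0 * norm h"
  proof -
    have "norm ((2 * psi1 L (w \<bullet> w) * (h \<bullet> w)) *\<^sub>R w) = 2 * \<bar>psi1 L (w \<bullet> w)\<bar> * \<bar>h \<bullet> w\<bar> * norm w"
      by (simp add: abs_mult)
    also have "\<dots> \<le> 2 * \<bar>psi1 L (w \<bullet> w)\<bar> * (norm h * norm w) * norm w"
      by (intro mult_right_mono mult_left_mono Cauchy_Schwarz_ineq2) auto
    also have "\<dots> = 2 * (\<bar>psi1 L (w \<bullet> w)\<bar> * (w \<bullet> w)) * norm h"
      by (simp add: power2_norm_eq_inner[symmetric] power2_eq_square)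
    also have "\<dots> \<le> 2 * B0 * norm h" using p1 by (simp add: mult_right_mono)
    finally show ?thesis .
  qed
  finally show "norm (blinfun_apply (Dphi L w) h) \<le> (2 + 2 * B0) * norm h" by (simp add: algebra_simps)
qed

lemma P6_bound: assumes L: "L > 0" and x: "0 \<le> x" shows "\<bar>P6 x L\<bar> * x \<le> L"
proof -
  consider "x < L/2" | "L/2 \<le> x" "x < L" | "L \<le> x" by linarith
  then show ?thesis
  proof cases
    case 1 then show ?thesis unfolding P6_alt using x L by simp
  next
    case 2
    have xp: "x > 0" using 2 L by simp
    have u: "1 \<le> L / x" "L / x \<le> 2" using 2 xp by (auto simp: field_simps)
    have g: "1 \<le> gp (L / x)" "gp (L / x) \<le> L / x" using gp_bounds[OF u] by auto
    have "\<bar>P6 x L\<bar> * x = gp (L / x) * x" unfolding P6_alt using 2 g by simp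
    also have "\<dots> \<le> (L / x) * x" using mult_right_mono[OF g(2) less_imp_le[OF xp]] .
    also have "\<dots> = L" using xp by simp
    finally show ?thesis .
  next
    case 3
    have xp: "x > 0" using 3 L by simp
    then show ?thesis unfolding P6_alt using 3 L by (simp add: abs_of_pos)
  qed
qed



lemma thbar_phi: "thbar L \<delta> th thp = phi L (thdot \<delta> th thp)"
  unfolding thbar_def phi_def psi_def by (simp add: norm_eq_sqrt_inner[symmetric])

lemma part_i:
  fixes \<delta> L :: real
  assumes d: "\<delta> > 0" and L: "L > 0"
  shows "\<exists>(D1 :: (real^'n) \<times> (real^'n) \<Rightarrow> ((real^'n) \<times> (real^'n)) \<Rightarrow>\<^sub>L (real^'n))
           (D2 :: (real^'n) \<times> (real^'n) \<Rightarrow> ((real^'n) \<times> (real^'n)) \<Rightarrow>\<^sub>L (((real^'n) \<times> (real^'n)) \<Rightarrow>\<^sub>L (real^'n))).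
          (\<forall>p. ((\<lambda>q. thbar L \<delta> (fst q) (snd q)) has_derivative blinfun_apply (D1 p)) (at p)) \<and>
          (\<forall>p. (D1 has_derivative blinfun_apply (D2 p)) (at p)) \<and>
          (\<forall>p. \<exists>U. open U \<and> p \<in> U \<and> (\<exists>C. C-lipschitz_on U D2))"
proof -
  define V :: "((real^'n) \<times> (real^'n)) \<Rightarrow>\<^sub>L (real^'n)" where
    "V = (1 / \<delta>) *\<^sub>R (fst_blinfun - snd_blinfun)"
  have Vapp: "blinfun_apply V q = thdot \<delta> (fst q) (snd q)" for q
    unfolding V_def thdot_def by (simp add: blinfun.bilinear_simps)
  have Vd: "(blinfun_apply V has_derivative blinfun_apply V) (at p)" for p
    by (rule bounded_linear_imp_has_derivative[OF blinfun.bounded_linear_right])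
  define D1 :: "(real^'n) \<times> (real^'n) \<Rightarrow> ((real^'n) \<times> (real^'n)) \<Rightarrow>\<^sub>L (real^'n)" where
    "D1 = (\<lambda>p. Dphi L (V p) o\<^sub>L V)"
  define G where "G = (\<lambda>p k. D2phi L (V p) (V k) o\<^sub>L V)"
  have Gbl: "bounded_linear (G p)" for p
    unfolding G_def
    by (rule bounded_linear_compose[OF bounded_bilinear.bounded_linear_left[OF bounded_bilinear_blinfun_compose]
          bounded_linear_compose[OF blinfun.bounded_linear_right blinfun.bounded_linear_right]])
  define D2 :: "(real^'n) \<times> (real^'n) \<Rightarrow> ((real^'n) \<times> (real^'n)) \<Rightarrow>\<^sub>L (((real^'n) \<times> (real^'n)) \<Rightarrow>\<^sub>L (real^'n))" where
    "D2 = (\<lambda>p. Blinfun (G p))"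
  have D2app: "blinfun_apply (D2 p) = G p" for p
    unfolding D2_def by (rule bounded_linear_Blinfun_apply[OF Gbl])
  have s1: "((\<lambda>q. thbar L \<delta> (fst q) (snd q)) has_derivative blinfun_apply (D1 p)) (at p)" for p
  proof -
    have "((\<lambda>q. phi L (blinfun_apply V q)) has_derivative (\<lambda>k. blinfun_apply (Dphi L (V p)) (V k))) (at p)"
      by (rule has_derivative_compose[OF Vd phi_deriv[OF L]])
    moreover have "(\<lambda>q. thbar L \<delta> (fst q) (snd q)) = (\<lambda>q. phi L (blinfun_apply V q))"
      by (simp add: Vapp thbar_phi)
    moreover have "blinfun_apply (D1 p) = (\<lambda>k. blinfun_apply (Dphi L (V p)) (V k))"
      by (simp add: D1_def fun_eq_iff)
    ultimately show ?thesis by simp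
  qed
  have s2: "(D1 has_derivative blinfun_apply (D2 p)) (at p)" for p
  proof -
    have a: "((\<lambda>q. Dphi L (blinfun_apply V q)) has_derivative (\<lambda>k. blinfun_apply (D2phi L (V p)) (V k))) (at p)"
      by (rule has_derivative_compose[OF Vd Dphi_deriv[OF L]])
    have "((\<lambda>q. Dphi L (V q) o\<^sub>L V) has_derivative
        (\<lambda>k. D2phi L (V p) (V k) o\<^sub>L V)) (at p)"
      using bounded_bilinear.FDERIV[OF bounded_bilinear_blinfun_compose a has_derivative_const[of V]] by simp
    then show ?thesis unfolding D1_def
      by (rule has_derivative_eq_rhs) (auto simp: D2app G_def)
  qed
  have s3: "\<exists>U. open U \<and> p \<in> U \<and> (\<exists>C. C-lipschitz_on U D2)" for p
  proof -
    obtain C where C: "C-lipschitz_on (ball (V p) 1) (D2phi L :: real^'n \<Rightarrow> _)"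
      using D2phi_lip[OF L] by blast
    have C0: "C \<ge> 0" using lipschitz_on_nonneg[OF C] .
    define U where "U = blinfun_apply V -` ball (V p) 1"
    have oU: "open U" unfolding U_def
      by (rule open_vimage[OF open_ball linear_continuous_on[OF blinfun.bounded_linear_right]])
    have pU: "p \<in> U" unfolding U_def by simp
    define nV where "nV = norm V"
    have nV: "nV \<ge> 0" unfolding nV_def by simp
    have "(C * nV * nV * nV)-lipschitz_on U D2"
    proof (rule lipschitz_onI)
      show "0 \<le> C * nV * nV * nV" using C0 nV by simp
      fix q q' assume q: "q \<in> U" and q': "q' \<in> U"
      define \<Delta> where "\<Delta> = D2phi L (V q) - D2phi L (V q')"
      have nD: "norm \<Delta> \<le> C * dist (V q) (V q')"
        unfolding \<Delta>_def dist_norm[symmetric] using lipschitz_onD[OF C] q q' unfolding U_def by auto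
      have dV: "dist (V q) (V q') \<le> nV * dist q q'"
        unfolding dist_norm nV_def by (metis blinfun.diff_right norm_blinfun)
      have "norm (D2 q - D2 q') \<le> norm \<Delta> * nV * nV"
      proof (rule norm_blinfun_bound)
        show "0 \<le> norm \<Delta> * nV * nV" using nV by simp
        fix k
        have "blinfun_apply (D2 q - D2 q') k = blinfun_apply \<Delta> (V k) o\<^sub>L V"
          unfolding \<Delta>_def by (simp add: blinfun.bilinear_simps D2app G_def bounded_bilinear.diff_left[OF bounded_bilinear_blinfun_compose])
        then have "norm (blinfun_apply (D2 q - D2 q') k) \<le> norm (blinfun_apply \<Delta> (V k)) * nV"
          unfolding nV_def by (simp add: norm_blinfun_compose)
        also have "\<dots> \<le> (norm \<Delta> * norm (blinfun_apply V k)) * nV"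
          by (rule mult_right_mono[OF norm_blinfun nV])
        also have "\<dots> \<le> (norm \<Delta> * (nV * norm k)) * nV"
          unfolding nV_def by (intro mult_right_mono mult_left_mono norm_blinfun) auto
        finally show "norm (blinfun_apply (D2 q - D2 q') k) \<le> norm \<Delta> * nV * nV * norm k"
          by (simp add: mult_ac)
      qed
      also have "\<dots> \<le> (C * dist (V q) (V q')) * nV * nV"
        by (intro mult_right_mono nD nV)
      also have "\<dots> \<le> (C * (nV * dist q q')) * nV * nV"
        by (intro mult_right_mono mult_left_mono dV C0 nV)
      finally show "dist (D2 q) (D2 q') \<le> C * nV * nV * nV * dist q q'"
        by (simp add: dist_norm mult_ac)
    qed
    then show ?thesis using oU pU by blast
  qed
  show ?thesis
    by (rule exI[of _ D1], rule exI[of _ D2]) (use s1 s2 s3 in blast)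
qed



lemma part_ii: assumes "\<delta> > 0" "L > 0" shows "norm (thbar L \<delta> th thp) \<le> L"
  unfolding thbar_def using P6_bound[OF assms(2) norm_ge_zero[of "thdot \<delta> th thp"]] by simp

lemma part_iii: assumes "\<delta> > 0" "L > 0" "norm (thdot \<delta> th thp) \<le> L / 2"
  shows "thbar L \<delta> th thp = thdot \<delta> th thp"
proof -
  have "P6 (norm (thdot \<delta> th thp)) L = 1"
  proof (cases "norm (thdot \<delta> th thp) < L / 2")
    case True then show ?thesis unfolding P6_alt by simp
  next
    case False
    then have e: "norm (thdot \<delta> th thp) = L / 2" using assms(3) by simp
    have "L / 2 < L" "L / (L / 2) = 2" using assms(2) by auto
    then show ?thesis unfolding P6_alt e using gp_vals by simp
  qed
  then show ?thesis unfolding thbar_def by simp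
qed

lemma part_iv: "\<exists>L18. \<forall>\<delta> L (th :: real^'n) thp. \<delta> > 0 \<longrightarrow> L > 0 \<longrightarrow>
         (\<exists>Da Db.
            ((\<lambda>x. thbar L \<delta> x thp) has_derivative Da) (at th) \<and> onorm Da \<le> L18 / \<delta> \<and>
            ((\<lambda>y. thbar L \<delta> th y) has_derivative Db) (at thp) \<and> onorm Db \<le> L18 / \<delta>)"
proof -
  obtain B0 where B0: "B0 \<ge> 0" "\<forall>L s. L > 0 \<longrightarrow> 0 \<le> s \<longrightarrow> \<bar>psi1 L s\<bar> * s \<le> B0"
    using psi1_s_bound by blast
  have "\<exists>Da Db.
            ((\<lambda>x. thbar L \<delta> x thp) has_derivative Da) (at th) \<and> onorm Da \<le> (2 + 2 * B0) / \<delta> \<and>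
            ((\<lambda>y. thbar L \<delta> th y) has_derivative Db) (at thp) \<and> onorm Db \<le> (2 + 2 * B0) / \<delta>"
    if d: "\<delta> > 0" and L: "L > 0" for \<delta> L and th thp :: "real^'n"
  proof -
    define w where "w = thdot \<delta> th thp"
    have nD: "norm (Dphi L w) \<le> 2 + 2 * B0" by (rule Dphi_norm[OF L B0(2)])
    have bnd: "norm (blinfun_apply (Dphi L w) ((1 / \<delta>) *\<^sub>R z)) \<le> (2 + 2 * B0) / \<delta> * norm h"
      if z: "norm z = norm h" for z h :: "real^'n"
    proof -
      have "norm (blinfun_apply (Dphi L w) ((1 / \<delta>) *\<^sub>R z)) \<le> norm (Dphi L w) * norm ((1 / \<delta>) *\<^sub>R z)"
        by (rule norm_blinfun)
      also have "norm ((1 / \<delta>) *\<^sub>R z) = norm h / \<delta>" using d z by simp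
      also have "norm (Dphi L w) * (norm h / \<delta>) \<le> (2 + 2 * B0) * (norm h / \<delta>)"
        using nD d by (intro mult_right_mono) auto
      finally show ?thesis by simp
    qed
    have ga: "((\<lambda>x. (1 / \<delta>) *\<^sub>R (x - thp)) has_derivative (\<lambda>h. (1 / \<delta>) *\<^sub>R (h - 0))) (at th)"
      by (rule has_derivative_scaleR_right[OF has_derivative_diff[OF has_derivative_ident has_derivative_const]])
    have gb: "((\<lambda>y. (1 / \<delta>) *\<^sub>R (th - y)) has_derivative (\<lambda>h. (1 / \<delta>) *\<^sub>R (0 - h))) (at thp)"
      by (rule has_derivative_scaleR_right[OF has_derivative_diff[OF has_derivative_const has_derivative_ident]])
    have wa: "(1 / \<delta>) *\<^sub>R (th - thp) = w" unfolding w_def thdot_def ..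
    have da: "((\<lambda>x. thbar L \<delta> x thp) has_derivative (\<lambda>h. blinfun_apply (Dphi L w) ((1 / \<delta>) *\<^sub>R (h - 0)))) (at th)"
      using has_derivative_compose[OF ga phi_deriv[OF L]] unfolding wa
      by (simp add: thbar_phi thdot_def)
    have db: "((\<lambda>y. thbar L \<delta> th y) has_derivative (\<lambda>h. blinfun_apply (Dphi L w) ((1 / \<delta>) *\<^sub>R (0 - h)))) (at thp)"
      using has_derivative_compose[OF gb phi_deriv[OF L]] unfolding wa
      by (simp add: thbar_phi thdot_def)
    have oa: "onorm (\<lambda>h. blinfun_apply (Dphi L w) ((1 / \<delta>) *\<^sub>R (h - 0))) \<le> (2 + 2 * B0) / \<delta>"
    proof (rule onorm_bound)
      show "0 \<le> (2 + 2 * B0) / \<delta>" using B0(1) d by simp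
      fix h :: "real^'n"
      show "norm (blinfun_apply (Dphi L w) ((1 / \<delta>) *\<^sub>R (h - 0))) \<le> (2 + 2 * B0) / \<delta> * norm h"
        by (rule bnd) simp
    qed
    have ob: "onorm (\<lambda>h. blinfun_apply (Dphi L w) ((1 / \<delta>) *\<^sub>R (0 - h))) \<le> (2 + 2 * B0) / \<delta>"
    proof (rule onorm_bound)
      show "0 \<le> (2 + 2 * B0) / \<delta>" using B0(1) d by simp
      fix h :: "real^'n"
      show "norm (blinfun_apply (Dphi L w) ((1 / \<delta>) *\<^sub>R (0 - h))) \<le> (2 + 2 * B0) / \<delta> * norm h"
        by (rule bnd) simp
    qed
    show ?thesis using da db oa ob by blast
  qed
  then show ?thesis by blast
qed


theorem corollary13:
  fixes \<nu> er L2 :: real and A :: "real^'n^3"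
  assumes "\<nu> > 0" and "er > 0" and "L2 > 0"
  shows
   "(\<forall>\<delta> L17. \<delta> > 0 \<longrightarrow> L17 > 0 \<longrightarrow>
       (\<exists>(D1 :: (real^'n) \<times> (real^'n) \<Rightarrow> ((real^'n) \<times> (real^'n)) \<Rightarrow>\<^sub>L (real^'n))
           (D2 :: (real^'n) \<times> (real^'n) \<Rightarrow> ((real^'n) \<times> (real^'n)) \<Rightarrow>\<^sub>L (((real^'n) \<times> (real^'n)) \<Rightarrow>\<^sub>L (real^'n))).
          (\<forall>p. ((\<lambda>q. thbar L17 \<delta> (fst q) (snd q)) has_derivative blinfun_apply (D1 p)) (at p)) \<and>
          (\<forall>p. (D1 has_derivative blinfun_apply (D2 p)) (at p)) \<and>
          (\<forall>p. \<exists>U. open U \<and> p \<in> U \<and> (\<exists>C. C-lipschitz_on U D2))))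
    \<and> (\<forall>\<delta> L17 (th :: real^'n) thp. \<delta> > 0 \<longrightarrow> L17 > 0 \<longrightarrow>
         norm (thbar L17 \<delta> th thp) \<le> L17)
    \<and> (\<forall>\<delta> L17 (th :: real^'n) thp. \<delta> > 0 \<longrightarrow> L17 > 0 \<longrightarrow>
         norm (thdot \<delta> th thp) \<le> L17 / 2 \<longrightarrow>
         thbar L17 \<delta> th thp = thdot \<delta> th thp \<and>
         ffric \<nu> er L2 A th (thdot \<delta> th thp) = ffric \<nu> er L2 A th (thbar L17 \<delta> th thp))
    \<and> (\<exists>L18. \<forall>\<delta> L17 (th :: real^'n) thp. \<delta> > 0 \<longrightarrow> L17 > 0 \<longrightarrow>
         (\<exists>Da Db.
            ((\<lambda>x. thbar L17 \<delta> x thp) has_derivative Da) (at th) \<and> onorm Da \<le> L18 / \<delta> \<and>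
            ((\<lambda>y. thbar L17 \<delta> th y) has_derivative Db) (at thp) \<and> onorm Db \<le> L18 / \<delta>))"
  proof -
  have c1: "\<forall>\<delta> L. \<delta> > 0 \<longrightarrow> L > 0 \<longrightarrow>
       (\<exists>(D1 :: (real^'n) \<times> (real^'n) \<Rightarrow> ((real^'n) \<times> (real^'n)) \<Rightarrow>\<^sub>L (real^'n))
           (D2 :: (real^'n) \<times> (real^'n) \<Rightarrow> ((real^'n) \<times> (real^'n)) \<Rightarrow>\<^sub>L (((real^'n) \<times> (real^'n)) \<Rightarrow>\<^sub>L (real^'n))).
          (\<forall>p. ((\<lambda>q. thbar L \<delta> (fst q) (snd q)) has_derivative blinfun_apply (D1 p)) (at p)) \<and>
          (\<forall>p. (D1 has_derivative blinfun_apply (D2 p)) (at p)) \<and>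
          (\<forall>p. \<exists>U. open U \<and> p \<in> U \<and> (\<exists>C. C-lipschitz_on U D2)))"
    by (intro allI impI part_i)
  have c2: "\<forall>\<delta> L (th :: real^'n) thp. \<delta> > 0 \<longrightarrow> L > 0 \<longrightarrow>
         norm (thbar L \<delta> th thp) \<le> L"
    by (intro allI impI part_ii)
  have c3: "\<forall>\<delta> L (th :: real^'n) thp. \<delta> > 0 \<longrightarrow> L > 0 \<longrightarrow>
         norm (thdot \<delta> th thp) \<le> L / 2 \<longrightarrow>
         thbar L \<delta> th thp = thdot \<delta> th thp \<and>
         ffric \<nu> er L2 A th (thdot \<delta> th thp) = ffric \<nu> er L2 A th (thbar L \<delta> th thp)"
  proof (intro allI impI)
    fix \<delta> L :: real and th thp :: "real^'n"
    assume "\<delta> > 0" "L > 0" "norm (thdot \<delta> th thp) \<le> L / 2"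
    then have e: "thbar L \<delta> th thp = thdot \<delta> th thp" by (rule part_iii)
    show "thbar L \<delta> th thp = thdot \<delta> th thp \<and>
         ffric \<nu> er L2 A th (thdot \<delta> th thp) = ffric \<nu> er L2 A th (thbar L \<delta> th thp)"
      by (simp add: e)
  qed
  have c4: "\<exists>L18. \<forall>\<delta> L (th :: real^'n) thp. \<delta> > 0 \<longrightarrow> L > 0 \<longrightarrow>
         (\<exists>Da Db.
            ((\<lambda>x. thbar L \<delta> x thp) has_derivative Da) (at th) \<and> onorm Da \<le> L18 / \<delta> \<and>
            ((\<lambda>y. thbar L \<delta> th y) has_derivative Db) (at thp) \<and> onorm Db \<le> L18 / \<delta>)"
    by (rule part_iv)
  show ?thesis by (intro conjI c1 c2 c3 c4)
qed

end
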